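(* Let $(\mathcal{C},\otimes,I,c)$ be a strict braided monoidal category and let $V,W$ be objects of $\mathcal{C}$ such that the internal homs $\hom(V,I)$ and $\hom(W,I)$ exist. Then $$\mathrm{ev}_{V,I}\circ(\mathrm{id}_{\hom(V,I)}\otimes\mathrm{ev}_{W,I}\otimes\mathrm{id}_V)=\mathrm{ev}_{W,I}\circ(\mathrm{id}_{\hom(W,I)}\otimes\mathrm{ev}_{V,I}\otimes\mathrm{id}_W)\circ\big((c_{\hom(W,I),\hom(V,I)})^{-1}\otimes c_{W,V}\big)$$ as morphisms $\hom(V,I)\otimes\hom(W,I)\otimes W\otimes V\to I$.
   Context: For objects $U,Y$, an internal hom $\hom(U,Y)$ is an object together with a natural isomorphism $\Theta_{X,U,Y}:\operatorname{Hom}_{\mathcal{C}}(X\otimes U,Y)\to\operatorname{Hom}_{\mathcal{C}}(X,\hom(U,Y))$ (natural in $X$). The evaluation morphism is $\mathrm{ev}_{U,Y}=\Theta^{-1}_{\hom(U,Y),U,Y}(\mathrm{id}_{\hom(U,Y)}):\hom(U,Y)\otimes U\to Y$. *)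

theory Defs
  imports Main
begin

record ('o, 'm) smcat =
  Obj :: "'o set"
  Hom :: "'o \<Rightarrow> 'o \<Rightarrow> 'm set"
  comp :: "'m \<Rightarrow> 'm \<Rightarrow> 'm"     (* comp g f = g \<circ> f *)
  ident :: "'o \<Rightarrow> 'm"
  tens_o :: "'o \<Rightarrow> 'o \<Rightarrow> 'o"
  tens_m :: "'m \<Rightarrow> 'm \<Rightarrow> 'm"
  unit_o :: "'o"
  braid :: "'o \<Rightarrow> 'o \<Rightarrow> 'm"    (* braid a b = c_{a,b} : a \<otimes> b \<rightarrow> b \<otimes> a *)

definition is_category :: "('o, 'm, 'x) smcat_scheme \<Rightarrow> bool" where
  "is_category C \<longleftrightarrow>
     (\<forall>a b f. f \<in> Hom C a b \<longrightarrow> a \<in> Obj C \<and> b \<in> Obj C) \<and>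
     (\<forall>a b a' b' f. f \<in> Hom C a b \<and> f \<in> Hom C a' b' \<longrightarrow> a = a' \<and> b = b') \<and>
     (\<forall>a\<in>Obj C. ident C a \<in> Hom C a a) \<and>
     (\<forall>a b c f g. f \<in> Hom C a b \<and> g \<in> Hom C b c \<longrightarrow> comp C g f \<in> Hom C a c) \<and>
     (\<forall>a b f. f \<in> Hom C a b \<longrightarrow> comp C f (ident C a) = f \<and> comp C (ident C b) f = f) \<and>
     (\<forall>a b c d f g h. f \<in> Hom C a b \<and> g \<in> Hom C b c \<and> h \<in> Hom C c d \<longrightarrow>
        comp C h (comp C g f) = comp C (comp C h g) f)"

definition is_iso_pair :: "('o, 'm, 'x) smcat_scheme \<Rightarrow> 'o \<Rightarrow> 'o \<Rightarrow> 'm \<Rightarrow> 'm \<Rightarrow> bool" where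
  "is_iso_pair C a b f g \<longleftrightarrow> f \<in> Hom C a b \<and> g \<in> Hom C b a \<and>
     comp C g f = ident C a \<and> comp C f g = ident C b"

text \<open>The inverse of an isomorphism f : a \<rightarrow> b (unique in a category).\<close>
definition minv :: "('o, 'm, 'x) smcat_scheme \<Rightarrow> 'o \<Rightarrow> 'o \<Rightarrow> 'm \<Rightarrow> 'm" where
  "minv C a b f = (THE g. is_iso_pair C a b f g)"

definition is_strict_monoidal :: "('o, 'm, 'x) smcat_scheme \<Rightarrow> bool" where
  "is_strict_monoidal C \<longleftrightarrow>
     is_category C \<and>
     unit_o C \<in> Obj C \<and>
     (\<forall>a\<in>Obj C. \<forall>b\<in>Obj C. tens_o C a b \<in> Obj C) \<and>
     (\<forall>a b c d f g. f \<in> Hom C a b \<and> g \<in> Hom C c d \<longrightarrow>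
        tens_m C f g \<in> Hom C (tens_o C a c) (tens_o C b d)) \<and>
     (\<forall>a\<in>Obj C. \<forall>b\<in>Obj C. tens_m C (ident C a) (ident C b) = ident C (tens_o C a b)) \<and>
     (\<forall>a b c a' b' c' f g f' g'. f \<in> Hom C a b \<and> g \<in> Hom C b c \<and>
        f' \<in> Hom C a' b' \<and> g' \<in> Hom C b' c' \<longrightarrow>
        tens_m C (comp C g f) (comp C g' f') = comp C (tens_m C g g') (tens_m C f f')) \<and>
     (\<forall>a\<in>Obj C. \<forall>b\<in>Obj C. \<forall>c\<in>Obj C.
        tens_o C (tens_o C a b) c = tens_o C a (tens_o C b c)) \<and>
     (\<forall>a\<in>Obj C. tens_o C (unit_o C) a = a \<and> tens_o C a (unit_o C) = a) \<and>
     (\<forall>a b a' b' a'' b'' f g h. f \<in> Hom C a b \<and> g \<in> Hom C a' b' \<and> h \<in> Hom C a'' b'' \<longrightarrow>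
        tens_m C (tens_m C f g) h = tens_m C f (tens_m C g h)) \<and>
     (\<forall>a b f. f \<in> Hom C a b \<longrightarrow>
        tens_m C (ident C (unit_o C)) f = f \<and> tens_m C f (ident C (unit_o C)) = f)"

definition is_strict_braided_monoidal :: "('o, 'm, 'x) smcat_scheme \<Rightarrow> bool" where
  "is_strict_braided_monoidal C \<longleftrightarrow>
     is_strict_monoidal C \<and>
     (\<forall>a\<in>Obj C. \<forall>b\<in>Obj C. \<exists>g. is_iso_pair C (tens_o C a b) (tens_o C b a) (braid C a b) g) \<and>
     (\<forall>a b c d f g. f \<in> Hom C a b \<and> g \<in> Hom C c d \<longrightarrow>
        comp C (braid C b d) (tens_m C f g) = comp C (tens_m C g f) (braid C a c)) \<and>
     (\<forall>a\<in>Obj C. \<forall>b\<in>Obj C. \<forall>c\<in>Obj C.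
        braid C a (tens_o C b c) =
          comp C (tens_m C (ident C b) (braid C a c)) (tens_m C (braid C a b) (ident C c)) \<and>
        braid C (tens_o C a b) c =
          comp C (tens_m C (braid C a c) (ident C b)) (tens_m C (ident C a) (braid C b c)))"

text \<open>(H, \<Theta>) is an internal hom hom(U,Y): H an object and
  \<Theta> X : Hom(X \<otimes> U, Y) \<rightarrow> Hom(X, H) a bijection for every object X, natural in X.\<close>
definition is_internal_hom ::
  "('o, 'm, 'x) smcat_scheme \<Rightarrow> 'o \<Rightarrow> 'o \<Rightarrow> 'o \<Rightarrow> ('o \<Rightarrow> 'm \<Rightarrow> 'm) \<Rightarrow> bool" where
  "is_internal_hom C U Y H \<Theta> \<longleftrightarrow>
     H \<in> Obj C \<and>
     (\<forall>X\<in>Obj C. bij_betw (\<Theta> X) (Hom C (tens_o C X U) Y) (Hom C X H)) \<and>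
     (\<forall>X X' h f. h \<in> Hom C X' X \<and> f \<in> Hom C (tens_o C X U) Y \<longrightarrow>
        \<Theta> X' (comp C f (tens_m C h (ident C U))) = comp C (\<Theta> X f) h)"

definition ev ::
  "('o, 'm, 'x) smcat_scheme \<Rightarrow> 'o \<Rightarrow> 'o \<Rightarrow> 'o \<Rightarrow> ('o \<Rightarrow> 'm \<Rightarrow> 'm) \<Rightarrow> 'm" where
  "ev C U Y H \<Theta> = inv_into (Hom C (tens_o C H U) Y) (\<Theta> H) (ident C H)"

end

theory Submission
  imports Defs
begin

locale sbm =
  fixes C :: "('o, 'm, 'x) smcat_scheme"
  assumes M: "is_strict_braided_monoidal C"
begin

lemma SM: "is_strict_monoidal C" using M unfolding is_strict_braided_monoidal_def by metis
lemma CAT: "is_category C" using SM unfolding is_strict_monoidal_def by metis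

lemma hom_obj: "f \<in> Hom C a b \<Longrightarrow> a \<in> Obj C \<and> b \<in> Obj C"
  using CAT unfolding is_category_def by metis
lemma id_in: "a \<in> Obj C \<Longrightarrow> ident C a \<in> Hom C a a"
  using CAT unfolding is_category_def by metis
lemma comp_in: "f \<in> Hom C a b \<Longrightarrow> g \<in> Hom C b c \<Longrightarrow> comp C g f \<in> Hom C a c"
  using CAT unfolding is_category_def by metis
lemma id_r: "f \<in> Hom C a b \<Longrightarrow> comp C f (ident C a) = f"
  using CAT unfolding is_category_def by metis
lemma id_l: "f \<in> Hom C a b \<Longrightarrow> comp C (ident C b) f = f"
  using CAT unfolding is_category_def by metis
lemma cassoc: "f \<in> Hom C a b \<Longrightarrow> g \<in> Hom C b c \<Longrightarrow> h \<in> Hom C c d \<Longrightarrow>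
    comp C h (comp C g f) = comp C (comp C h g) f"
  using CAT unfolding is_category_def by metis
lemma unit_obj: "unit_o C \<in> Obj C"
  using SM unfolding is_strict_monoidal_def by metis
lemma tens_obj: "a \<in> Obj C \<Longrightarrow> b \<in> Obj C \<Longrightarrow> tens_o C a b \<in> Obj C"
  using SM unfolding is_strict_monoidal_def by metis
lemma tens_in: "f \<in> Hom C a b \<Longrightarrow> g \<in> Hom C c d \<Longrightarrow>
    tens_m C f g \<in> Hom C (tens_o C a c) (tens_o C b d)"
  using SM unfolding is_strict_monoidal_def by metis
lemma tens_id: "a \<in> Obj C \<Longrightarrow> b \<in> Obj C \<Longrightarrow>
    tens_m C (ident C a) (ident C b) = ident C (tens_o C a b)"
  using SM unfolding is_strict_monoidal_def by metis
lemma interchange: "f \<in> Hom C a b \<Longrightarrow> g \<in> Hom C b c \<Longrightarrow> f' \<in> Hom C a' b' \<Longrightarrow> g' \<in> Hom C b' c' \<Longrightarrow>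
    tens_m C (comp C g f) (comp C g' f') = comp C (tens_m C g g') (tens_m C f f')"
  using SM unfolding is_strict_monoidal_def by metis
lemma oassoc: "a \<in> Obj C \<Longrightarrow> b \<in> Obj C \<Longrightarrow> c \<in> Obj C \<Longrightarrow>
    tens_o C (tens_o C a b) c = tens_o C a (tens_o C b c)"
  using SM unfolding is_strict_monoidal_def by metis
lemma ounit: "a \<in> Obj C \<Longrightarrow> tens_o C (unit_o C) a = a \<and> tens_o C a (unit_o C) = a"
  using SM unfolding is_strict_monoidal_def by metis
lemma massoc: "f \<in> Hom C a b \<Longrightarrow> g \<in> Hom C a' b' \<Longrightarrow> h \<in> Hom C a'' b'' \<Longrightarrow>
    tens_m C (tens_m C f g) h = tens_m C f (tens_m C g h)"
  using SM unfolding is_strict_monoidal_def by metis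
lemma munit: "f \<in> Hom C a b \<Longrightarrow>
    tens_m C (ident C (unit_o C)) f = f \<and> tens_m C f (ident C (unit_o C)) = f"
  using SM unfolding is_strict_monoidal_def by metis

lemma braid_iso: "a \<in> Obj C \<Longrightarrow> b \<in> Obj C \<Longrightarrow>
    \<exists>g. is_iso_pair C (tens_o C a b) (tens_o C b a) (braid C a b) g"
  using M unfolding is_strict_braided_monoidal_def by metis
lemma braid_in: "a \<in> Obj C \<Longrightarrow> b \<in> Obj C \<Longrightarrow>
    braid C a b \<in> Hom C (tens_o C a b) (tens_o C b a)"
  using braid_iso unfolding is_iso_pair_def by blast
lemma bnat: "f \<in> Hom C a b \<Longrightarrow> g \<in> Hom C c d \<Longrightarrow>
    comp C (braid C b d) (tens_m C f g) = comp C (tens_m C g f) (braid C a c)"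
  using M unfolding is_strict_braided_monoidal_def by metis
lemma hex1: "a \<in> Obj C \<Longrightarrow> b \<in> Obj C \<Longrightarrow> c \<in> Obj C \<Longrightarrow>
    braid C a (tens_o C b c) =
          comp C (tens_m C (ident C b) (braid C a c)) (tens_m C (braid C a b) (ident C c))"
  using M unfolding is_strict_braided_monoidal_def by metis
lemma hex2: "a \<in> Obj C \<Longrightarrow> b \<in> Obj C \<Longrightarrow> c \<in> Obj C \<Longrightarrow>
    braid C (tens_o C a b) c =
          comp C (tens_m C (braid C a c) (ident C b)) (tens_m C (ident C a) (braid C b c))"
  using M unfolding is_strict_braided_monoidal_def by metis

lemma iso_unique: "is_iso_pair C a b f g \<Longrightarrow> is_iso_pair C a b f g' \<Longrightarrow> g = g'"
proof -
  assume A: "is_iso_pair C a b f g" and B: "is_iso_pair C a b f g'"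
  have g: "g \<in> Hom C b a" and f: "f \<in> Hom C a b" and g': "g' \<in> Hom C b a"
    using A B unfolding is_iso_pair_def by auto
  have "g = comp C g (ident C b)" using id_r[OF g] by simp
  also have "\<dots> = comp C g (comp C f g')" using B unfolding is_iso_pair_def by simp
  also have "\<dots> = comp C (comp C g f) g'" using cassoc[OF g' f g] .
  also have "\<dots> = g'" using A id_l[OF g'] unfolding is_iso_pair_def by simp
  finally show ?thesis .
qed

lemma minv_iso: "a \<in> Obj C \<Longrightarrow> b \<in> Obj C \<Longrightarrow>
   is_iso_pair C (tens_o C a b) (tens_o C b a) (braid C a b)
      (minv C (tens_o C a b) (tens_o C b a) (braid C a b))"
  unfolding minv_def using braid_iso iso_unique by (metis theI)

lemma braid_unit_r: "a \<in> Obj C \<Longrightarrow> braid C a (unit_o C) = ident C a"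
proof -
  assume a: "a \<in> Obj C"
  let ?I = "unit_o C"
  have I: "?I \<in> Obj C" by (rule unit_obj)
  obtain g where G: "is_iso_pair C a a (braid C a ?I) g" using braid_iso[OF a I] ounit[OF a] by auto
  have c: "braid C a ?I \<in> Hom C a a" and g: "g \<in> Hom C a a" using G unfolding is_iso_pair_def by auto
  have "braid C a ?I = braid C a (tens_o C ?I ?I)" using ounit[OF I] by simp
  also have "\<dots> = comp C (braid C a ?I) (braid C a ?I)"
    using hex1[OF a I I] munit[OF c] by simp
  finally have e: "braid C a ?I = comp C (braid C a ?I) (braid C a ?I)" .
  have "ident C a = comp C g (braid C a ?I)" using G unfolding is_iso_pair_def by simp
  also have "\<dots> = comp C g (comp C (braid C a ?I) (braid C a ?I))" using e by simp
  also have "\<dots> = comp C (comp C g (braid C a ?I)) (braid C a ?I)" using cassoc[OF c c g] .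
  also have "\<dots> = braid C a ?I" using G id_l[OF c] unfolding is_iso_pair_def by simp
  finally show ?thesis by simp
qed

lemma braid_unit_l: "a \<in> Obj C \<Longrightarrow> braid C (unit_o C) a = ident C a"
proof -
  assume a: "a \<in> Obj C"
  let ?I = "unit_o C"
  have I: "?I \<in> Obj C" by (rule unit_obj)
  obtain g where G: "is_iso_pair C a a (braid C ?I a) g" using braid_iso[OF I a] ounit[OF a] by auto
  have c: "braid C ?I a \<in> Hom C a a" and g: "g \<in> Hom C a a" using G unfolding is_iso_pair_def by auto
  have "braid C ?I a = braid C (tens_o C ?I ?I) a" using ounit[OF I] by simp
  also have "\<dots> = comp C (braid C ?I a) (braid C ?I a)"
    using hex2[OF I I a] munit[OF c] by simp
  finally have e: "braid C ?I a = comp C (braid C ?I a) (braid C ?I a)" .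
  have "ident C a = comp C g (braid C ?I a)" using G unfolding is_iso_pair_def by simp
  also have "\<dots> = comp C g (comp C (braid C ?I a) (braid C ?I a))" using e by simp
  also have "\<dots> = comp C (comp C g (braid C ?I a)) (braid C ?I a)" using cassoc[OF c c g] .
  also have "\<dots> = braid C ?I a" using G id_l[OF c] unfolding is_iso_pair_def by simp
  finally show ?thesis by simp
qed

end


theorem lemma3p23:
  fixes C :: "('o, 'm, 'x) smcat_scheme"
    and V W HV HW :: 'o
    and \<Theta>V \<Theta>W :: "'o \<Rightarrow> 'm \<Rightarrow> 'm"
  assumes "is_strict_braided_monoidal C"
    and "V \<in> Obj C" and "W \<in> Obj C"
    and "is_internal_hom C V (unit_o C) HV \<Theta>V"
    and "is_internal_hom C W (unit_o C) HW \<Theta>W"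
  shows "comp C (ev C V (unit_o C) HV \<Theta>V)
           (tens_m C (tens_m C (ident C HV) (ev C W (unit_o C) HW \<Theta>W)) (ident C V))
       = comp C (comp C (ev C W (unit_o C) HW \<Theta>W)
           (tens_m C (tens_m C (ident C HW) (ev C V (unit_o C) HV \<Theta>V)) (ident C W)))
           (tens_m C (minv C (tens_o C HW HV) (tens_o C HV HW) (braid C HW HV)) (braid C W V))"
proof -
  interpret sbm C using assms(1) by unfold_locales
  define I where "I = unit_o C"
  define f where "f = ev C V (unit_o C) HV \<Theta>V"
  define g where "g = ev C W (unit_o C) HW \<Theta>W"
  define k where "k = minv C (tens_o C HW HV) (tens_o C HV HW) (braid C HW HV)"
  let ?t = "tens_m C" and ?o = "tens_o C" and ?c = "comp C" and ?i = "ident C"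
  let ?a = HV and ?b = HW and ?cc = W and ?d = V
  have oI: "I \<in> Obj C" unfolding I_def by (rule unit_obj)
  have oa: "HV \<in> Obj C" using assms(4) unfolding is_internal_hom_def by blast
  have ob: "HW \<in> Obj C" using assms(5) unfolding is_internal_hom_def by blast
  have oc: "W \<in> Obj C" and od: "V \<in> Obj C" using assms by auto
  note objs = oI oa ob oc od
  have fH: "f \<in> Hom C (?o HV V) I"
  proof -
    have "bij_betw (\<Theta>V HV) (Hom C (?o HV V) I) (Hom C HV HV)"
      using assms(4) oa unfolding is_internal_hom_def I_def by blast
    then show ?thesis unfolding f_def ev_def I_def
      by (metis bij_betw_imp_surj_on id_in inv_into_into oa)
  qed
  have gH: "g \<in> Hom C (?o HW W) I"
  proof -
    have "bij_betw (\<Theta>W HW) (Hom C (?o HW W) I) (Hom C HW HW)"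
      using assms(5) ob unfolding is_internal_hom_def I_def by blast
    then show ?thesis unfolding g_def ev_def I_def
      by (metis bij_betw_imp_surj_on id_in inv_into_into ob)
  qed
  have kiso: "is_iso_pair C (?o HW HV) (?o HV HW) (braid C HW HV) k"
    unfolding k_def using minv_iso[OF ob oa] .
  have kH: "k \<in> Hom C (?o HV HW) (?o HW HV)" using kiso unfolding is_iso_pair_def by blast
  have ia: "?i HV \<in> Hom C HV HV" and ib: "?i HW \<in> Hom C HW HW" and ic: "?i W \<in> Hom C W W"
    and idd: "?i V \<in> Hom C V V" and iI: "?i I \<in> Hom C I I" using objs id_in by auto
  note simps = oassoc ounit tens_obj objs I_def
  have B1: "braid C (?o HW W) V \<in> Hom C (?o HW (?o W V)) (?o V (?o HW W))"
    using braid_in[of "?o HW W" V] objs by (simp add: simps)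
  have tgd: "?t g (?i V) \<in> Hom C (?o HW (?o W V)) V"
    using tens_in[OF gH idd] by (simp add: simps)
  have tdg: "?t (?i V) g \<in> Hom C (?o V (?o HW W)) V"
    using tens_in[OF idd gH] by (simp add: simps)
  have L2: "?t g (?i V) = ?c (?t (?i V) g) (braid C (?o HW W) V)"
    using bnat[OF gH idd] braid_unit_l[OF od] id_l[OF tgd] by (simp add: I_def)
  have L3: "?t (?i HV) (?c (?t (?i V) g) (braid C (?o HW W) V))
      = ?c (?t (?i HV) (?t (?i V) g)) (?t (?i HV) (braid C (?o HW W) V))"
    using interchange[OF ia ia B1 tdg] id_l[OF ia] by simp
  have L4: "?t (?i HV) (?t (?i V) g) = ?t (?i (?o HV V)) g"
    using massoc[OF ia idd gH, symmetric] tens_id[OF oa od] by simp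
  have iad: "?i (?o HV V) \<in> Hom C (?o HV V) (?o HV V)" using id_in tens_obj oa od by blast
  have tadg: "?t (?i (?o HV V)) g \<in> Hom C (?o HV (?o V (?o HW W))) (?o HV V)"
    using tens_in[OF iad gH] by (simp add: simps)
  have taB: "?t (?i HV) (braid C (?o HW W) V) \<in> Hom C (?o HV (?o HW (?o W V))) (?o HV (?o V (?o HW W)))"
    using tens_in[OF ia B1] by (simp add: simps)
  have L6: "?c f (?t (?i (?o HV V)) g) = ?t f g"
    using interchange[OF iad fH gH iI] id_r[OF fH] id_l[OF gH] munit[OF fH] by (simp add: I_def)
  have LHS: "?c f (?t (?t (?i HV) g) (?i V)) = ?c (?t f g) (?t (?i HV) (braid C (?o HW W) V))"
  proof -
    have "?c f (?t (?t (?i HV) g) (?i V)) = ?c f (?t (?i HV) (?t g (?i V)))"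
      using massoc[OF ia gH idd] by simp
    also have "\<dots> = ?c f (?c (?t (?i (?o HV V)) g) (?t (?i HV) (braid C (?o HW W) V)))"
      using L2 L3 L4 by simp
    also have "\<dots> = ?c (?c f (?t (?i (?o HV V)) g)) (?t (?i HV) (braid C (?o HW W) V))"
      using cassoc[OF taB tadg fH] .
    finally show ?thesis using L6 by simp
  qed
  have Bcd: "braid C W V \<in> Hom C (?o W V) (?o V W)" using braid_in oc od by blast
  have bHH: "braid C HW HV \<in> Hom C (?o HW HV) (?o HV HW)" using braid_in ob oa by blast
  have bHV: "braid C HW V \<in> Hom C (?o HW V) (?o V HW)" using braid_in ob od by blast
  have bHad: "braid C HW (?o HV V) \<in> Hom C (?o HW (?o HV V)) (?o HV (?o V HW))"
    using braid_in[of HW "?o HV V"] objs by (simp add: simps)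
  have PH: "?t (?i HW) f \<in> Hom C (?o HW (?o HV V)) HW"
    using tens_in[OF ib fH] by (simp add: simps)
  have fbH: "?t f (?i HW) \<in> Hom C (?o HV (?o V HW)) HW"
    using tens_in[OF fH ib] by (simp add: simps)
  have tPc: "?t (?t (?i HW) f) (?i W) \<in> Hom C (?o HW (?o HV (?o V W))) (?o HW W)"
    using tens_in[OF PH ic] by (simp add: simps)
  have QH: "?t k (?i V) \<in> Hom C (?o HV (?o HW V)) (?o HW (?o HV V))"
    using tens_in[OF kH idd] by (simp add: simps)
  have tQc: "?t (?t k (?i V)) (?i W) \<in> Hom C (?o HV (?o HW (?o V W))) (?o HW (?o HV (?o V W)))"
    using tens_in[OF QH ic] by (simp add: simps)
  have iab: "?i (?o HV HW) \<in> Hom C (?o HV HW) (?o HV HW)" using id_in tens_obj oa ob by blast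
  have ivw: "?i (?o V W) \<in> Hom C (?o V W) (?o V W)" using id_in tens_obj od oc by blast
  have ibc: "?i (?o HW W) \<in> Hom C (?o HW W) (?o HW W)" using id_in tens_obj ob oc by blast
  have tB2: "?t (?i (?o HV HW)) (braid C W V) \<in> Hom C (?o HV (?o HW (?o W V))) (?o HV (?o HW (?o V W)))"
    using tens_in[OF iab Bcd] by (simp add: simps)
  have XH: "?t (?i HV) (braid C HW V) \<in> Hom C (?o HV (?o HW V)) (?o HV (?o V HW))"
    using tens_in[OF ia bHV] by (simp add: simps)
  have YH: "?t (braid C HW HV) (?i V) \<in> Hom C (?o HW (?o HV V)) (?o HV (?o HW V))"
    using tens_in[OF bHH idd] by (simp add: simps)
  have bWc: "?t (braid C HW V) (?i W) \<in> Hom C (?o HW (?o V W)) (?o V (?o HW W))"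
    using tens_in[OF bHV ic] by (simp add: simps)
  have ibB: "?t (?i HW) (braid C W V) \<in> Hom C (?o HW (?o W V)) (?o HW (?o V W))"
    using tens_in[OF ib Bcd] by (simp add: simps)
  have R2: "?t k (braid C W V) = ?c (?t (?t k (?i V)) (?i W)) (?t (?i (?o HV HW)) (braid C W V))"
    using interchange[OF iab kH Bcd ivw] id_r[OF kH] id_l[OF Bcd] massoc[OF kH idd ic]
      tens_id[OF od oc] by simp
  have kc: "?c (braid C HW HV) k = ?i (?o HV HW)" using kiso unfolding is_iso_pair_def by blast
  have YQ: "?c (?t (braid C HW HV) (?i V)) (?t k (?i V)) = ?i (?o HV (?o HW V))"
    using interchange[OF kH bHH idd idd, symmetric] kc id_l[OF idd] tens_id oa ob od tens_obj oassoc
    by simp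
  have Pe: "?t (?i HW) f = ?c (?t f (?i HW)) (braid C HW (?o HV V))"
    using bnat[OF ib fH] braid_unit_r[OF ob] id_l[OF PH] by (simp add: I_def)
  have R5: "?c (?t (?i HW) f) (?t k (?i V)) = ?c (?t f (?i HW)) (?t (?i HV) (braid C HW V))"
  proof -
    have "?c (?t (?i HW) f) (?t k (?i V))
       = ?c (?c (?t f (?i HW)) (?c (?t (?i HV) (braid C HW V)) (?t (braid C HW HV) (?i V)))) (?t k (?i V))"
      using Pe hex1[OF ob oa od] by simp
    also have "\<dots> = ?c (?t f (?i HW)) (?c (?c (?t (?i HV) (braid C HW V)) (?t (braid C HW HV) (?i V))) (?t k (?i V)))"
      using cassoc[OF QH comp_in[OF YH XH] fbH] by simp
    also have "\<dots> = ?c (?t f (?i HW)) (?c (?t (?i HV) (braid C HW V)) (?c (?t (braid C HW HV) (?i V)) (?t k (?i V))))"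
      using cassoc[OF QH YH XH] by simp
    also have "\<dots> = ?c (?t f (?i HW)) (?t (?i HV) (braid C HW V))"
      using YQ id_r[OF XH] by simp
    finally show ?thesis .
  qed
  have R6: "?t (?c (?t f (?i HW)) (?t (?i HV) (braid C HW V))) (?i W)
     = ?c (?t f (?i (?o HW W))) (?t (?i HV) (?t (braid C HW V) (?i W)))"
    using interchange[OF XH fbH ic ic] id_l[OF ic] massoc[OF fH ib ic] tens_id[OF ob oc]
      massoc[OF ia bHV ic] by simp
  have R7: "?c (?t (?i HV) (?t (braid C HW V) (?i W))) (?t (?i (?o HV HW)) (braid C W V))
      = ?t (?i HV) (braid C (?o HW W) V)"
    using interchange[OF ia ia ibB bWc, symmetric] id_l[OF ia] hex2[OF ob oc od]
      tens_id[OF oa ob, symmetric] massoc[OF ia ib Bcd] by simp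
  have fiH: "?t f (?i (?o HW W)) \<in> Hom C (?o HV (?o V (?o HW W))) (?o HW W)"
    using tens_in[OF fH ibc] by (simp add: simps)
  have R8: "?c g (?t f (?i (?o HW W))) = ?t f g"
    using interchange[OF fH iI ibc gH] id_l[OF fH] id_r[OF gH] munit[OF gH] by (simp add: I_def)
  have X2: "?t (?i HV) (?t (braid C HW V) (?i W)) \<in> Hom C (?o HV (?o HW (?o V W))) (?o HV (?o V (?o HW W)))"
    using tens_in[OF ia bWc] by (simp add: simps)
  have RHS: "?c (?c g (?t (?t (?i HW) f) (?i W))) (?t k (braid C W V))
     = ?c (?t f g) (?t (?i HV) (braid C (?o HW W) V))"
  proof -
    have "?c (?c g (?t (?t (?i HW) f) (?i W))) (?t k (braid C W V))
       = ?c g (?c (?t (?t (?i HW) f) (?i W)) (?c (?t (?t k (?i V)) (?i W)) (?t (?i (?o HV HW)) (braid C W V))))"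
      using R2 cassoc[OF comp_in[OF tB2 tQc] tPc gH] by simp
    also have "\<dots> = ?c g (?c (?c (?t (?t (?i HW) f) (?i W)) (?t (?t k (?i V)) (?i W))) (?t (?i (?o HV HW)) (braid C W V)))"
      using cassoc[OF tB2 tQc tPc] by simp
    also have "\<dots> = ?c g (?c (?t (?c (?t (?i HW) f) (?t k (?i V))) (?i W)) (?t (?i (?o HV HW)) (braid C W V)))"
      using interchange[OF QH PH ic ic] id_l[OF ic] by simp
    also have "\<dots> = ?c g (?c (?c (?t f (?i (?o HW W))) (?t (?i HV) (?t (braid C HW V) (?i W)))) (?t (?i (?o HV HW)) (braid C W V)))"
      using R5 R6 by simp
    also have "\<dots> = ?c g (?c (?t f (?i (?o HW W))) (?t (?i HV) (braid C (?o HW W) V)))"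
      using cassoc[OF tB2 X2 fiH] R7 by simp
    also have "\<dots> = ?c (?t f g) (?t (?i HV) (braid C (?o HW W) V))"
      using cassoc[OF taB fiH gH] R8 by simp
    finally show ?thesis .
  qed
  show ?thesis using LHS RHS unfolding f_def g_def k_def I_def by simp
qed

end
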